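(* For every $n\ge1$, every extended irregular dominating set of the path $P_n$ has at least $\lceil (n+1)/2\rceil$ vertices; that is, $\gamma_e(P_n)\ge\lceil (n+1)/2\rceil$.
   Context: $P_n$ is the path on $n$ vertices $[x_1,\dots,x_n]$ with edges $\{x_i,x_{i+1}\}$. In a finite simple graph $\Gamma=(V,E)$ with distance $d$, a vertex $v$ carrying a non-negative integer label $\ell$ dominates (covers) exactly the vertices $u$ with $d(u,v)=\ell$; a vertex labeled $0$ dominates only itself. An extended irregular dominating set is a set $S\subseteq V$ with a labeling $\lambda:S\to\mathbb{Z}_{\ge0}$ with distinct labels on distinct vertices, such that every vertex of $V$ is dominated by some vertex of $S$; some vertex of $S$ has label $0$. $\gamma_e(\Gamma)$ denotes the minimum cardinality of an extended irregular dominating set of $\Gamma$. *)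

theory Defs
  imports Complex_Main
begin

text \<open>A finite simple graph is given by a vertex set V and a symmetric irreflexive
edge relation E.  A walk is a nonempty list of vertices of V in which consecutive
entries are adjacent; its length is the number of edges (length of list minus 1).\<close>

definition is_walk :: "'a set \<Rightarrow> ('a \<Rightarrow> 'a \<Rightarrow> bool) \<Rightarrow> 'a list \<Rightarrow> bool" where
  "is_walk V E xs \<longleftrightarrow> xs \<noteq> [] \<and> set xs \<subseteq> V \<and>
     (\<forall>i. Suc i < length xs \<longrightarrow> E (xs ! i) (xs ! Suc i))"

definition has_walk :: "'a set \<Rightarrow> ('a \<Rightarrow> 'a \<Rightarrow> bool) \<Rightarrow> 'a \<Rightarrow> 'a \<Rightarrow> nat \<Rightarrow> bool" where
  "has_walk V E u v k \<longleftrightarrow>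
     (\<exists>xs. is_walk V E xs \<and> hd xs = u \<and> last xs = v \<and> length xs = Suc k)"

definition at_dist :: "'a set \<Rightarrow> ('a \<Rightarrow> 'a \<Rightarrow> bool) \<Rightarrow> 'a \<Rightarrow> 'a \<Rightarrow> nat \<Rightarrow> bool" where
  "at_dist V E u v k \<longleftrightarrow> has_walk V E u v k \<and> (\<forall>j<k. \<not> has_walk V E u v j)"

definition ext_irr_dom :: "'a set \<Rightarrow> ('a \<Rightarrow> 'a \<Rightarrow> bool) \<Rightarrow> 'a set \<Rightarrow> ('a \<Rightarrow> nat) \<Rightarrow> bool" where
  "ext_irr_dom V E S lam \<longleftrightarrow> S \<subseteq> V \<and> inj_on lam S \<and>
     (\<forall>u\<in>V. \<exists>v\<in>S. at_dist V E v u (lam v)) \<and> (\<exists>v\<in>S. lam v = 0)"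

text \<open>The path P_n with vertices x_1,...,x_n (represented by 1..n) and edges {x_i,x_{i+1}}.\<close>

definition path_V :: "nat \<Rightarrow> nat set" where
  "path_V n = {1..n}"

definition path_E :: "nat \<Rightarrow> nat \<Rightarrow> bool" where
  "path_E i j \<longleftrightarrow> j = Suc i \<or> i = Suc j"

end

theory Submission
  imports Defs
begin

lemma walk_bound:
  assumes "is_walk V path_E xs"
  shows "\<forall>i<length xs. \<bar>int (xs ! i) - int (xs ! 0)\<bar> \<le> int i"
proof (intro allI impI)
  fix i assume "i < length xs"
  then show "\<bar>int (xs ! i) - int (xs ! 0)\<bar> \<le> int i"
  proof (induction i)
    case 0 then show ?case by simp
  next
    case (Suc i)
    then have "path_E (xs ! i) (xs ! Suc i)" using assms unfolding is_walk_def by blast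
    then show ?case using Suc by (auto simp: path_E_def)
  qed
qed

lemma walk_len:
  assumes "has_walk V path_E v u k"
  shows "\<bar>int u - int v\<bar> \<le> int k"
proof -
  obtain xs where xs: "is_walk V path_E xs" "hd xs = v" "last xs = u" "length xs = Suc k"
    using assms unfolding has_walk_def by blast
  have ne: "xs \<noteq> []" using xs(4) by auto
  have "last xs = xs ! k" using xs(4) ne by (simp add: last_conv_nth)
  moreover have "hd xs = xs ! 0" using ne by (simp add: hd_conv_nth)
  ultimately show ?thesis using walk_bound[OF xs(1)] xs by auto
qed

lemma straight_walk:
  assumes "u \<in> path_V n" "v \<in> path_V n"
  shows "has_walk (path_V n) path_E v u (nat \<bar>int u - int v\<bar>)"
proof (cases "v \<le> u")
  case True
  let ?xs = "map (\<lambda>i. v + i) [0..<Suc (u - v)]"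
  have "is_walk (path_V n) path_E ?xs"
    using assms True unfolding is_walk_def path_V_def path_E_def by (auto simp del: upt_Suc)
  moreover have "hd ?xs = v" by (simp add: hd_map del: upt_Suc)
  moreover have "last ?xs = u" using True by (simp add: last_map del: upt_Suc)
  moreover have "length ?xs = Suc (nat \<bar>int u - int v\<bar>)" using True by simp
  ultimately show ?thesis unfolding has_walk_def by blast
next
  case False
  let ?xs = "map (\<lambda>i. v - i) [0..<Suc (v - u)]"
  have "is_walk (path_V n) path_E ?xs"
    using assms False unfolding is_walk_def path_V_def path_E_def by (auto simp del: upt_Suc)
  moreover have "hd ?xs = v" by (simp add: hd_map del: upt_Suc)
  moreover have "last ?xs = u" using False by (simp add: last_map del: upt_Suc)
  moreover have "length ?xs = Suc (nat \<bar>int u - int v\<bar>)" using False by simp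
  ultimately show ?thesis unfolding has_walk_def by blast
qed

lemma dist_exact:
  assumes "u \<in> path_V n" "v \<in> path_V n" "at_dist (path_V n) path_E v u k"
  shows "u = v + k \<or> v = u + k"
proof -
  have "\<bar>int u - int v\<bar> \<le> int k" using assms(3) walk_len unfolding at_dist_def by blast
  moreover have "\<not> nat \<bar>int u - int v\<bar> < k"
    using assms straight_walk[OF assms(1,2)] unfolding at_dist_def by blast
  ultimately show ?thesis by linarith
qed

theorem lemma5p6:
  fixes n :: nat and S :: "nat set" and lam :: "nat \<Rightarrow> nat"
  assumes "n \<ge> 1"
    and "ext_irr_dom (path_V n) path_E S lam"
  shows "of_int \<lceil>(real n + 1) / 2\<rceil> \<le> real (card S)"
proof -
  define D where "D v = {v + lam v, v - lam v}" for v
  have SV: "S \<subseteq> path_V n" and inj: "inj_on lam S"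
    and cov: "\<forall>u\<in>path_V n. \<exists>v\<in>S. at_dist (path_V n) path_E v u (lam v)"
    and z: "\<exists>v\<in>S. lam v = 0"
    using assms(2) unfolding ext_irr_dom_def by auto
  have finS: "finite S" using SV finite_subset unfolding path_V_def by blast
  obtain v0 where v0: "v0 \<in> S" "lam v0 = 0" using z by blast
  have "path_V n \<subseteq> (\<Union>v\<in>S. D v)"
  proof
    fix u assume u: "u \<in> path_V n"
    then obtain v where v: "v \<in> S" "at_dist (path_V n) path_E v u (lam v)" using cov by blast
    have "u = v + lam v \<or> v = u + lam v" using dist_exact[OF u _ v(2)] v(1) SV by blast
    then have "u \<in> D v" unfolding D_def by auto
    then show "u \<in> (\<Union>v\<in>S. D v)" using v by blast
  qed
  then have "n \<le> card (\<Union>v\<in>S. D v)"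
    using card_mono[of "\<Union>v\<in>S. D v" "path_V n"] finS unfolding path_V_def D_def by auto
  also have "\<dots> \<le> (\<Sum>v\<in>S. card (D v))" using card_UN_le[OF finS] by blast
  also have "\<dots> = card (D v0) + (\<Sum>v\<in>S - {v0}. card (D v))"
    using finS v0 by (simp add: sum.remove)
  also have "\<dots> \<le> 1 + (\<Sum>v\<in>S - {v0}. 2)"
  proof (rule add_mono)
    show "card (D v0) \<le> 1" using v0 unfolding D_def by simp
    show "(\<Sum>v\<in>S - {v0}. card (D v)) \<le> (\<Sum>v\<in>S - {v0}. 2)"
      by (rule sum_mono) (simp add: D_def card_insert_le_m1)
  qed
  also have "\<dots> = 1 + 2 * (card S - 1)" using finS v0 by simp
  finally have "n \<le> 1 + 2 * (card S - 1)" .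
  moreover have "card S \<ge> 1" using finS v0 by (metis One_nat_def card_gt_0_iff empty_iff less_eq_Suc_le)
  ultimately have "real n + 1 \<le> 2 * real (card S)" by linarith
  then have "(real n + 1) / 2 \<le> real (card S)" by simp
  then have "\<lceil>(real n + 1) / 2\<rceil> \<le> int (card S)"
    by (metis ceiling_le of_int_of_nat_eq)
  then show ?thesis by simp
qed

end
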